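(* Let $t=B(r,t_1,\dots,t_k)$ be a rooted tree with vertex set $I$, $k\geq1$. Then the interval $[\widehat{0},t]$ in $\Pi_{\operatorname{NAP}}(I)$ is isomorphic to the product over $j\in\{1,\dots,k\}$ of the posets $[\widehat{0},B(r,t_j)]$ (each taken in $\Pi_{\operatorname{NAP}}$ of the vertex set of $B(r,t_j)$).
   Context: $B(r,t_1,\dots,t_k)$ denotes the rooted tree obtained from rooted trees $t_1,\dots,t_k$ on disjoint vertex sets by adding a new vertex $r$, which becomes the root, and an edge from $r$ to the root of each $t_i$. $\Pi_{\operatorname{NAP}}(I)$ is the set of forests of rooted trees whose vertex set is exactly $I$, partially ordered as follows: $y$ covers $x$ iff $y$ is obtained from $x$ by adding an edge from the root of one component of $x$ to the root of another component (the latter root remaining the root); $\leq$ is the reflexive–transitive closure. $\widehat{0}$ is the forest of one-vertex trees. *)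

theory Defs
  imports "HOL-Library.FuncSet"
begin

text \<open>A forest of rooted trees on vertex set V is represented by its set of
  edges E, each edge (p, c) going from a parent p to a child c.\<close>

definition rooted_forest :: "'a set \<Rightarrow> 'a rel \<Rightarrow> bool" where
  "rooted_forest V E \<longleftrightarrow> finite V \<and> E \<subseteq> V \<times> V
     \<and> (\<forall>a b v. (a, v) \<in> E \<longrightarrow> (b, v) \<in> E \<longrightarrow> a = b)
     \<and> (\<forall>v. (v, v) \<notin> E\<^sup>+)"

definition roots :: "'a set \<Rightarrow> 'a rel \<Rightarrow> 'a set" where
  "roots V E = {v \<in> V. \<forall>u. (u, v) \<notin> E}"

definition rooted_tree :: "'a set \<Rightarrow> 'a rel \<Rightarrow> bool" where
  "rooted_tree V E \<longleftrightarrow> rooted_forest V E \<and> card (roots V E) = 1"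

definition tree_root :: "'a set \<Rightarrow> 'a rel \<Rightarrow> 'a" where
  "tree_root V E = (THE v. v \<in> roots V E)"

text \<open>B(r, t_j : j \<in> J): new root r joined to the roots of the trees (V j, E j).\<close>

definition graft_vertices :: "'a \<Rightarrow> ('i \<Rightarrow> 'a set) \<Rightarrow> 'i set \<Rightarrow> 'a set" where
  "graft_vertices r V J = insert r (\<Union>j\<in>J. V j)"

definition graft_edges :: "'a \<Rightarrow> ('i \<Rightarrow> 'a set) \<Rightarrow> ('i \<Rightarrow> 'a rel) \<Rightarrow> 'i set \<Rightarrow> 'a rel" where
  "graft_edges r V E J = (\<Union>j\<in>J. E j) \<union> (\<lambda>j. (r, tree_root (V j) (E j))) ` J"

text \<open>Covering relation of Pi_NAP(V): add an edge between the roots of two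
  distinct components.\<close>

definition nap_cover :: "'a set \<Rightarrow> 'a rel \<Rightarrow> 'a rel \<Rightarrow> bool" where
  "nap_cover V x y \<longleftrightarrow> rooted_forest V x \<and>
     (\<exists>a b. a \<in> roots V x \<and> b \<in> roots V x \<and> a \<noteq> b \<and> y = insert (a, b) x)"

definition nap_le :: "'a set \<Rightarrow> 'a rel \<Rightarrow> 'a rel \<Rightarrow> bool" where
  "nap_le V x y \<longleftrightarrow> rooted_forest V x \<and> rooted_forest V y \<and> (nap_cover V)\<^sup>*\<^sup>* x y"

definition nap_interval :: "'a set \<Rightarrow> 'a rel \<Rightarrow> 'a rel set" where
  "nap_interval V t = {x. nap_le V {} x \<and> nap_le V x t}"

definition poset_iso :: "'b set \<Rightarrow> ('b \<Rightarrow> 'b \<Rightarrow> bool) \<Rightarrow> 'c set \<Rightarrow> ('c \<Rightarrow> 'c \<Rightarrow> bool) \<Rightarrow> bool" where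
  "poset_iso A leA B leB \<longleftrightarrow> (\<exists>f. bij_betw f A B \<and>
     (\<forall>x\<in>A. \<forall>y\<in>A. leA x y \<longleftrightarrow> leB (f x) (f y)))"

end

theory Submission
  imports Defs
begin

definition ncond :: "'a rel \<Rightarrow> 'a rel \<Rightarrow> bool" where
  "ncond x y \<longleftrightarrow> x \<subseteq> y \<and> (\<forall>p c u. (p, c) \<in> y - x \<longrightarrow> (u, p) \<notin> x)"

lemma forest_subset:
  assumes "rooted_forest V y" "x \<subseteq> y" shows "rooted_forest V x"
proof -
  have "\<forall>v. (v,v) \<in> x\<^sup>+ \<longrightarrow> (v,v) \<in> y\<^sup>+" using assms(2) trancl_mono by blast
  thus ?thesis using assms unfolding rooted_forest_def by blast
qed

lemma nap_rt_imp: "(nap_cover V)\<^sup>*\<^sup>* x y \<Longrightarrow> ncond x y"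
proof (induction rule: rtranclp_induct)
  case base then show ?case by (simp add: ncond_def)
next
  case (step y z)
  then obtain a b where ab: "a \<in> roots V y" "b \<in> roots V y" "z = insert (a, b) y"
    unfolding nap_cover_def by blast
  show ?case using step.IH ab unfolding ncond_def roots_def by blast
qed

lemma ncond_imp_rt:
  assumes "rooted_forest V y" "ncond x y" shows "(nap_cover V)\<^sup>*\<^sup>* x y"
  using assms(2)
proof (induction "card (y - x)" arbitrary: x rule: less_induct)
  case less
  have fy: "finite V" "y \<subseteq> V \<times> V" "\<forall>a b v. (a, v) \<in> y \<longrightarrow> (b, v) \<in> y \<longrightarrow> a = b"
    "\<forall>v. (v, v) \<notin> y\<^sup>+" using assms(1) unfolding rooted_forest_def by auto
  have finy: "finite y" using fy(1,2) finite_subset by blast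
  show ?case
  proof (cases "x = y")
    case True then show ?thesis by simp
  next
    case False
    have xy: "x \<subseteq> y" using less.prems unfolding ncond_def by blast
    with False have ne: "y - x \<noteq> {}" by blast
    have "acyclic y" using fy(4) unfolding acyclic_def by blast
    hence "acyclic (y\<inverse>)" by (simp add: acyclic_converse)
    hence wf: "wf (y\<inverse>)" using finy by (intro finite_acyclic_wf) auto
    define S where "S = snd ` (y - x)"
    from ne obtain c0 where "c0 \<in> S" unfolding S_def by blast
    then obtain c where cS: "c \<in> S" and cmin: "\<forall>z. (z, c) \<in> y\<inverse> \<longrightarrow> z \<notin> S"
      using wf unfolding wf_eq_minimal by metis
    from cS obtain p where pc: "(p, c) \<in> y - x" unfolding S_def by force
    define x' where "x' = insert (p, c) x"
    have fx: "rooted_forest V x" using forest_subset[OF assms(1) xy] .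
    have pV: "p \<in> V" "c \<in> V" using pc fy(2) by auto
    have pr: "\<forall>u. (u, p) \<notin> x" using less.prems pc unfolding ncond_def by blast
    have cr: "\<forall>u. (u, c) \<notin> x" using pc xy fy(3) by blast
    have pnc: "p \<noteq> c" using pc fy(4) by (metis DiffD1 r_into_trancl')
    have cov: "nap_cover V x x'" unfolding nap_cover_def roots_def x'_def
      using fx pV pr cr pnc by blast
    have nc': "ncond x' y"
      unfolding ncond_def
    proof (intro conjI allI impI)
      show "x' \<subseteq> y" using xy pc unfolding x'_def by blast
    next
      fix p' c' u assume h: "(p', c') \<in> y - x'"
      show "(u, p') \<notin> x'"
      proof
        assume "(u, p') \<in> x'"
        moreover have "(u, p') \<notin> x" using less.prems h unfolding ncond_def x'_def by blast
        ultimately have "p' = c" unfolding x'_def by blast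
        hence "(c', c) \<in> y\<inverse>" "c' \<in> S" using h unfolding S_def x'_def by force+
        thus False using cmin by blast
      qed
    qed
    have "y - x' \<subset> y - x" using pc unfolding x'_def by blast
    hence "card (y - x') < card (y - x)" using finy by (meson finite_Diff psubset_card_mono)
    hence "(nap_cover V)\<^sup>*\<^sup>* x' y" using less.hyps nc' by blast
    thus ?thesis using cov by (meson converse_rtranclp_into_rtranclp)
  qed
qed

lemma nap_le_iff:
  assumes "rooted_forest V y" shows "nap_le V x y \<longleftrightarrow> ncond x y"
proof
  assume "nap_le V x y" thus "ncond x y" unfolding nap_le_def using nap_rt_imp by blast
next
  assume h: "ncond x y"
  hence "x \<subseteq> y" unfolding ncond_def by blast
  thus "nap_le V x y" unfolding nap_le_def using forest_subset[OF assms] assms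
      ncond_imp_rt[OF assms h] by blast
qed

lemma interval_eq:
  assumes "rooted_forest V t" shows "nap_interval V t = {x. ncond x t}"
proof -
  have "\<And>x. ncond x t \<Longrightarrow> nap_le V {} x"
  proof -
    fix x assume "ncond x t"
    hence "x \<subseteq> t" unfolding ncond_def by blast
    hence "rooted_forest V x" using forest_subset[OF assms] by blast
    thus "nap_le V {} x" using nap_le_iff by (metis empty_iff ncond_def empty_subsetI Diff_empty)
  qed
  thus ?thesis unfolding nap_interval_def using nap_le_iff[OF assms] by blast
qed

locale graft_setup =
  fixes r :: 'a and k :: nat and V :: "nat \<Rightarrow> 'a set" and E :: "nat \<Rightarrow> 'a rel"
  assumes trees: "\<forall>j\<in>{1..k}. rooted_tree (V j) (E j)"
    and disj: "\<forall>i\<in>{1..k}. \<forall>j\<in>{1..k}. i \<noteq> j \<longrightarrow> V i \<inter> V j = {}"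
    and rnot: "\<forall>j\<in>{1..k}. r \<notin> V j"
begin

abbreviation "\<rho> j \<equiv> tree_root (V j) (E j)"

lemma tree_facts:
  assumes "j \<in> {1..k}"
  shows "finite (V j)" "E j \<subseteq> V j \<times> V j"
    "\<forall>a b v. (a, v) \<in> E j \<longrightarrow> (b, v) \<in> E j \<longrightarrow> a = b"
    "\<forall>v. (v, v) \<notin> (E j)\<^sup>+" "\<rho> j \<in> V j" "\<forall>u. (u, \<rho> j) \<notin> E j"
proof -
  have t: "rooted_tree (V j) (E j)" using trees assms by blast
  thus "finite (V j)" "E j \<subseteq> V j \<times> V j"
    "\<forall>a b v. (a, v) \<in> E j \<longrightarrow> (b, v) \<in> E j \<longrightarrow> a = b"
    "\<forall>v. (v, v) \<notin> (E j)\<^sup>+" unfolding rooted_tree_def rooted_forest_def by auto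
  from t have "card (roots (V j) (E j)) = 1" unfolding rooted_tree_def by blast
  then obtain a where a: "roots (V j) (E j) = {a}" by (meson card_1_singletonE)
  hence "\<rho> j = a" unfolding tree_root_def by simp
  thus "\<rho> j \<in> V j" "\<forall>u. (u, \<rho> j) \<notin> E j" using a unfolding roots_def by auto
qed

lemma edge_iff: "(a, b) \<in> graft_edges r V E J \<longleftrightarrow>
   (\<exists>j\<in>J. (a, b) \<in> E j) \<or> (\<exists>j\<in>J. a = r \<and> b = \<rho> j)"
  unfolding graft_edges_def by auto

lemma trancl_char:
  assumes J: "J \<subseteq> {1..k}" and uv: "(u, v) \<in> (graft_edges r V E J)\<^sup>+"
  shows "(\<exists>j\<in>J. u \<in> V j \<and> v \<in> V j \<and> (u, v) \<in> (E j)\<^sup>+) \<or> (u = r \<and> v \<noteq> r)"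
  using uv
proof (induction rule: trancl_induct)
  case (base y)
  then show ?case using J tree_facts rnot unfolding edge_iff by blast
next
  case (step y z)
  from step.hyps(2) consider (e) i where "i \<in> J" "(y, z) \<in> E i"
    | (rt) i where "i \<in> J" "y = r" "z = \<rho> i" unfolding edge_iff by blast
  then show ?case
  proof cases
    case e
    have iK: "i \<in> {1..k}" using e J by blast
    have yz: "y \<in> V i" "z \<in> V i" using e(2) tree_facts(2)[OF iK] by auto
    from step.IH show ?thesis
    proof
      assume "\<exists>j\<in>J. u \<in> V j \<and> y \<in> V j \<and> (u, y) \<in> (E j)\<^sup>+"
      then obtain j where j: "j \<in> J" "u \<in> V j" "y \<in> V j" "(u, y) \<in> (E j)\<^sup>+" by blast
      have "i = j" using disj J j e yz by blast
      thus ?thesis using j e yz by (meson trancl.trancl_into_trancl)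
    next
      assume "u = r \<and> y \<noteq> r"
      thus ?thesis using yz rnot J e by blast
    qed
  next
    case rt
    have "\<rho> i \<noteq> r" using rt J tree_facts(5)[of i] rnot by auto
    from step.IH show ?thesis
    proof
      assume "\<exists>j\<in>J. u \<in> V j \<and> y \<in> V j \<and> (u, y) \<in> (E j)\<^sup>+"
      thus ?thesis using rt rnot J by blast
    next
      assume "u = r \<and> y \<noteq> r"
      thus ?thesis using rt by blast
    qed
  qed
qed

lemma forest_J:
  assumes J: "J \<subseteq> {1..k}"
  shows "rooted_forest (graft_vertices r V J) (graft_edges r V E J)"
  unfolding rooted_forest_def
proof (intro conjI allI impI)
  have "finite J" using J finite_subset by blast
  thus "finite (graft_vertices r V J)" unfolding graft_vertices_def
    using J tree_facts(1) by auto
next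
  show "graft_edges r V E J \<subseteq> graft_vertices r V J \<times> graft_vertices r V J"
    unfolding graft_edges_def graft_vertices_def using J tree_facts(2,5) by blast
next
  fix a b v assume h: "(a, v) \<in> graft_edges r V E J" "(b, v) \<in> graft_edges r V E J"
  from h(1) consider (e) i where "i \<in> J" "(a, v) \<in> E i"
    | (rt) i where "i \<in> J" "a = r" "v = \<rho> i" unfolding edge_iff by blast
  then show "a = b"
  proof cases
    case e
    have iK: "i \<in> {1..k}" using e J by blast
    have vi: "v \<in> V i" using e(2) tree_facts(2)[OF iK] by auto
    from h(2) consider (e2) i' where "i' \<in> J" "(b, v) \<in> E i'"
      | (rt2) i' where "i' \<in> J" "b = r" "v = \<rho> i'" unfolding edge_iff by blast
    then show ?thesis
    proof cases
      case e2
      have iK': "i' \<in> {1..k}" using e2 J by blast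
      have "v \<in> V i'" using e2(2) tree_facts(2)[OF iK'] by auto
      hence "i = i'" using vi disj J e e2 by blast
      thus ?thesis using e e2 J tree_facts(3) by blast
    next
      case rt2
      have "v \<in> V i'" using rt2 J tree_facts(5) by blast
      hence "i = i'" using vi disj J e rt2 by blast
      thus ?thesis using e rt2 J tree_facts(6) by blast
    qed
  next
    case rt
    have vi: "v \<in> V i" using rt J tree_facts(5) by blast
    from h(2) consider (e2) i' where "i' \<in> J" "(b, v) \<in> E i'"
      | (rt2) i' where "i' \<in> J" "b = r" "v = \<rho> i'" unfolding edge_iff by blast
    then show ?thesis
    proof cases
      case e2
      have iK': "i' \<in> {1..k}" using e2 J by blast
      have "v \<in> V i'" using e2(2) tree_facts(2)[OF iK'] by auto
      hence "i = i'" using vi disj J rt e2 by blast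
      thus ?thesis using rt e2 J tree_facts(6) by blast
    next
      case rt2
      thus ?thesis using rt by blast
    qed
  qed
next
  fix v show "(v, v) \<notin> (graft_edges r V E J)\<^sup>+"
    using trancl_char[OF J, of v v] J tree_facts(4) by blast
qed

abbreviation "K \<equiv> {1..k}"
abbreviation "T \<equiv> graft_edges r V E K"
abbreviation "Tj j \<equiv> graft_edges r V E {j}"

lemma T_union: "T = (\<Union>j\<in>K. Tj j)"
  unfolding graft_edges_def by auto

lemma Tj_sub: "j \<in> K \<Longrightarrow> Tj j \<subseteq> T"
  unfolding graft_edges_def by auto

lemma Tj_eq: "Tj j = insert (r, \<rho> j) (E j)"
  unfolding graft_edges_def by auto

lemma Tj_disj:
  assumes "i \<in> K" "j \<in> K" "i \<noteq> j" shows "Tj i \<inter> Tj j = {}"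
proof -
  have d: "V i \<inter> V j = {}" using disj assms by blast
  have ri: "\<rho> i \<in> V i" using tree_facts(5)[OF assms(1)] .
  have rj: "\<rho> j \<in> V j" using tree_facts(5)[OF assms(2)] .
  have ei: "E i \<subseteq> V i \<times> V i" using tree_facts(2)[OF assms(1)] .
  have ej: "E j \<subseteq> V j \<times> V j" using tree_facts(2)[OF assms(2)] .
  have rni: "r \<notin> V i" "r \<notin> V j" using rnot assms by auto
  have "\<rho> i \<noteq> \<rho> j" using ri rj d by (metis IntI empty_iff)
  moreover have "E i \<inter> E j = {}" using ei ej d by blast
  moreover have "(r, \<rho> j) \<notin> E i" "(r, \<rho> i) \<notin> E j" using ei ej rni by blast+
  ultimately show ?thesis unfolding Tj_eq by blast
qed

lemma locality:
  assumes j: "j \<in> K" and pc: "(p, c) \<in> Tj j" and up: "(u, p) \<in> T"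
  shows "(u, p) \<in> Tj j"
proof -
  from pc consider "(p, c) \<in> E j" | "p = r" "c = \<rho> j" unfolding edge_iff by blast
  then show ?thesis
  proof cases
    case 1
    hence pj: "p \<in> V j" using tree_facts(2) j by blast
    from up consider (e) i where "i \<in> K" "(u, p) \<in> E i"
      | (rt) i where "i \<in> K" "u = r" "p = \<rho> i" unfolding edge_iff by blast
    then show ?thesis
    proof cases
      case e
      hence "p \<in> V i" using tree_facts(2) by blast
      hence "i = j" using pj disj j e by blast
      thus ?thesis using e unfolding edge_iff by blast
    next
      case rt
      hence "p \<in> V i" using tree_facts(5) by blast
      hence "i = j" using pj disj j rt by blast
      thus ?thesis using rt unfolding edge_iff by blast
    qed
  next
    case 2
    from up consider (e) i where "i \<in> K" "(u, p) \<in> E i"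
      | (rt) i where "i \<in> K" "u = r" "p = \<rho> i" unfolding edge_iff by blast
    then show ?thesis
    proof cases
      case e thus ?thesis using 2 tree_facts(2) rnot by blast
    next
      case rt thus ?thesis using 2 tree_facts(5) rnot by blast
    qed
  qed
qed

lemma split_cond:
  assumes "x \<subseteq> T" "y \<subseteq> T"
  shows "ncond x y \<longleftrightarrow> (\<forall>j\<in>K. ncond (x \<inter> Tj j) (y \<inter> Tj j))"
proof
  assume "ncond x y" thus "\<forall>j\<in>K. ncond (x \<inter> Tj j) (y \<inter> Tj j)"
    unfolding ncond_def by blast
next
  assume h: "\<forall>j\<in>K. ncond (x \<inter> Tj j) (y \<inter> Tj j)"
  show "ncond x y" unfolding ncond_def
  proof (intro conjI allI impI)
    show "x \<subseteq> y"
    proof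
      fix z assume "z \<in> x"
      then obtain j where "j \<in> K" "z \<in> Tj j" using assms T_union by blast
      thus "z \<in> y" using h \<open>z \<in> x\<close> unfolding ncond_def by blast
    qed
  next
    fix p c u assume pc: "(p, c) \<in> y - x"
    then obtain j where j: "j \<in> K" "(p, c) \<in> Tj j" using assms T_union by blast
    show "(u, p) \<notin> x"
    proof
      assume "(u, p) \<in> x"
      hence "(u, p) \<in> Tj j" using locality[OF j] assms by blast
      thus False using h j pc \<open>(u, p) \<in> x\<close> unfolding ncond_def by blast
    qed
  qed
qed

lemma main:
  "poset_iso (nap_interval (graft_vertices r V K) T) (nap_le (graft_vertices r V K))
     (PiE K (\<lambda>j. nap_interval (graft_vertices r V {j}) (Tj j)))
     (\<lambda>F G. \<forall>j\<in>K. nap_le (graft_vertices r V {j}) (F j) (G j))"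
proof -
  have fT: "rooted_forest (graft_vertices r V K) T" using forest_J by blast
  have fTj: "\<And>j. j \<in> K \<Longrightarrow> rooted_forest (graft_vertices r V {j}) (Tj j)"
    using forest_J by blast
  have A: "nap_interval (graft_vertices r V K) T = {x. ncond x T}" using interval_eq[OF fT] .
  have B: "PiE K (\<lambda>j. nap_interval (graft_vertices r V {j}) (Tj j)) = PiE K (\<lambda>j. {y. ncond y (Tj j)})"
    using interval_eq[OF fTj] by (intro PiE_cong) auto
  have TTj: "\<And>j. j \<in> K \<Longrightarrow> T \<inter> Tj j = Tj j" using Tj_sub by blast
  define f where "f x = restrict (\<lambda>j. x \<inter> Tj j) K" for x
  have sub: "\<And>x. ncond x T \<Longrightarrow> x \<subseteq> T" unfolding ncond_def by blast
  have inj: "inj_on f {x. ncond x T}"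
  proof (rule inj_onI)
    fix x y assume x: "x \<in> {x. ncond x T}" and y: "y \<in> {x. ncond x T}" and e: "f x = f y"
    have eqs: "x \<inter> Tj j = y \<inter> Tj j" if j: "j \<in> K" for j
    proof -
      have "f x j = f y j" using e by simp
      thus ?thesis using j unfolding f_def by simp
    qed
    have "x \<subseteq> (\<Union>j\<in>K. Tj j)" using sub[of x] x T_union by simp
    hence xU: "x = (\<Union>j\<in>K. x \<inter> Tj j)" by blast
    have "y \<subseteq> (\<Union>j\<in>K. Tj j)" using sub[of y] y T_union by simp
    hence yU: "y = (\<Union>j\<in>K. y \<inter> Tj j)" by blast
    have "(\<Union>j\<in>K. x \<inter> Tj j) = (\<Union>j\<in>K. y \<inter> Tj j)" by (rule SUP_cong) (simp_all add: eqs)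
    thus "x = y" using xU yU by simp
  qed
  have img: "f ` {x. ncond x T} = PiE K (\<lambda>j. {y. ncond y (Tj j)})"
  proof
    show "f ` {x. ncond x T} \<subseteq> PiE K (\<lambda>j. {y. ncond y (Tj j)})"
    proof
      fix z assume "z \<in> f ` {x. ncond x T}"
      then obtain x where x: "ncond x T" "z = f x" by blast
      have "\<forall>j\<in>K. ncond (x \<inter> Tj j) (T \<inter> Tj j)" using split_cond[of x T] sub x by blast
      hence "\<forall>j\<in>K. ncond (x \<inter> Tj j) (Tj j)" using TTj by simp
      thus "z \<in> PiE K (\<lambda>j. {y. ncond y (Tj j)})" unfolding x(2) f_def by auto
    qed
  next
    show "PiE K (\<lambda>j. {y. ncond y (Tj j)}) \<subseteq> f ` {x. ncond x T}"
    proof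
      fix F assume F: "F \<in> PiE K (\<lambda>j. {y. ncond y (Tj j)})"
      have Fc: "\<And>j. j \<in> K \<Longrightarrow> ncond (F j) (Tj j)" using F by auto
      have Fs: "\<And>j. j \<in> K \<Longrightarrow> F j \<subseteq> Tj j" using Fc unfolding ncond_def by blast
      define x where "x = (\<Union>j\<in>K. F j)"
      have xT: "x \<subseteq> T" unfolding x_def using Fs Tj_sub by blast
      have xj: "\<And>j. j \<in> K \<Longrightarrow> x \<inter> Tj j = F j"
      proof -
        fix j assume j: "j \<in> K"
        have "\<And>i. i \<in> K \<Longrightarrow> i \<noteq> j \<Longrightarrow> F i \<inter> Tj j = {}"
          using Fs Tj_disj j by blast
        hence "\<And>i. i \<in> K \<Longrightarrow> F i \<inter> Tj j \<subseteq> F j" by blast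
        moreover have "x \<inter> Tj j = (\<Union>i\<in>K. F i \<inter> Tj j)" unfolding x_def by blast
        moreover have "F j \<subseteq> (\<Union>i\<in>K. F i \<inter> Tj j)" using Fs[OF j] j by blast
        ultimately show "x \<inter> Tj j = F j" by (metis (no_types, lifting) UN_least subset_antisym)
      qed
      have "F = f x"
      proof (rule ext)
        fix j show "F j = f x j"
        proof (cases "j \<in> K")
          case True thus ?thesis using xj unfolding f_def by simp
        next
          case False
          have "F j = undefined" using PiE_arb[OF F False] .
          moreover have "f x j = undefined" unfolding f_def using False by auto
          ultimately show ?thesis by simp
        qed
      qed
      moreover have "ncond x T"
      proof -
        have "\<forall>j\<in>K. ncond (x \<inter> Tj j) (T \<inter> Tj j)"
        proof
          fix j assume j: "j \<in> K"
          show "ncond (x \<inter> Tj j) (T \<inter> Tj j)" using Fc[OF j] by (simp only: xj[OF j] TTj[OF j])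
        qed
        thus ?thesis by (rule split_cond[OF xT order_refl, THEN iffD2])
      qed
      ultimately show "F \<in> f ` {x. ncond x T}" by blast
    qed
  qed
  have ord: "\<forall>x\<in>{x. ncond x T}. \<forall>y\<in>{x. ncond x T}.
      nap_le (graft_vertices r V K) x y \<longleftrightarrow> (\<forall>j\<in>K. nap_le (graft_vertices r V {j}) (f x j) (f y j))"
  proof (intro ballI)
    fix x y assume x: "x \<in> {x. ncond x T}" and y: "y \<in> {x. ncond x T}"
    have fy: "rooted_forest (graft_vertices r V K) y" using forest_subset[OF fT] sub y by blast
    have fyj: "\<And>j. j \<in> K \<Longrightarrow> rooted_forest (graft_vertices r V {j}) (y \<inter> Tj j)"
      using forest_subset[OF fTj] by blast
    have "nap_le (graft_vertices r V K) x y \<longleftrightarrow> ncond x y" using nap_le_iff[OF fy] .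
    also have "\<dots> \<longleftrightarrow> (\<forall>j\<in>K. ncond (x \<inter> Tj j) (y \<inter> Tj j))"
      using x y by (intro split_cond sub) auto
    also have "\<dots> \<longleftrightarrow> (\<forall>j\<in>K. nap_le (graft_vertices r V {j}) (x \<inter> Tj j) (y \<inter> Tj j))"
    proof (intro ball_cong refl)
      fix j assume j: "j \<in> K"
      show "ncond (x \<inter> Tj j) (y \<inter> Tj j) \<longleftrightarrow> nap_le (graft_vertices r V {j}) (x \<inter> Tj j) (y \<inter> Tj j)"
        using nap_le_iff[OF fyj[OF j]] by simp
    qed
    also have "\<dots> \<longleftrightarrow> (\<forall>j\<in>K. nap_le (graft_vertices r V {j}) (f x j) (f y j))"
      unfolding f_def by simp
    finally show "nap_le (graft_vertices r V K) x y \<longleftrightarrow> (\<forall>j\<in>K. nap_le (graft_vertices r V {j}) (f x j) (f y j))" .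
  qed
  have bij: "bij_betw f {x. ncond x T} (PiE K (\<lambda>j. {y. ncond y (Tj j)}))"
    using bij_betw_imageI[OF inj img] .
  show ?thesis unfolding poset_iso_def A B
    by (intro exI[of _ f] conjI bij ord)
qed

end

theorem proposition6p7:
  fixes r :: 'a and k :: nat and V :: "nat \<Rightarrow> 'a set" and E :: "nat \<Rightarrow> 'a rel"
  assumes "k \<ge> 1"
    and "\<forall>j\<in>{1..k}. rooted_tree (V j) (E j)"
    and "\<forall>i\<in>{1..k}. \<forall>j\<in>{1..k}. i \<noteq> j \<longrightarrow> V i \<inter> V j = {}"
    and "\<forall>j\<in>{1..k}. r \<notin> V j"
  shows "poset_iso
           (nap_interval (graft_vertices r V {1..k}) (graft_edges r V E {1..k}))
           (nap_le (graft_vertices r V {1..k}))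
           (PiE {1..k} (\<lambda>j. nap_interval (graft_vertices r V {j}) (graft_edges r V E {j})))
           (\<lambda>F G. \<forall>j\<in>{1..k}. nap_le (graft_vertices r V {j}) (F j) (G j))"
proof -
  interpret graft_setup r k V E using assms by unfold_locales auto
  show ?thesis using main .
qed

end
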